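(* Let $f:\mathbb{R}^N\times\mathbb{R}\to\mathbb{R}^N$ be $C^1$ with $f(x,t+T)=f(x,t)$ for all $x,t$, for some $T>0$, and let $x_\ast$ be a $T$-periodic (not necessarily minimal period) solution of $\dot x(t)=f(x(t),t)$. Let $K\in\mathbb{R}^{N\times N}$ be arbitrary. Then the geometric multiplicity of $1$ as an eigenvalue of the monodromy matrix $Y_0(T)$ of the uncontrolled linearization $\dot y(t)=\partial_x f(x_\ast(t),t)y(t)$ equals the geometric multiplicity of $1$ as an eigenvalue of the monodromy operator $Y_1(T)$ of the controlled linearization $\dot y(t)=\partial_x f(x_\ast(t),t)y(t)+K[y(t)-y(t-T)]$. (By convention the geometric multiplicity is $0$ if $1$ is not an eigenvalue.)
   Context: For a $T$-periodic continuous matrix function $A(t)$, $Y_0(t)\in\mathbb{R}^{N\times N}$ denotes the fundamental solution of $\dot y=A(t)y$ with $Y_0(0)=I$; $Y_0(T)$ is the monodromy matrix, its eigenvalues are the Floquet multipliers, and the geometric multiplicity of an eigenvalue $\mu$ is $\dim\{x\in\mathbb{C}^N:\mu x=Y_0(T)x\}$. For the delay equation $\dot y(t)=A(t)y(t)+K[y(t)-y(t-T)]$, for $\phi\in C([-T,0],\mathbb{C}^N)$ let $y^\phi$ be the unique solution on $[-T,\infty)$ with $y^\phi=\phi$ on $[-T,0]$, and set $(Y_1(t)\phi)(\theta)=y^\phi(t+\theta)$, $\theta\in[-T,0]$. The monodromy operator is $Y_1(T)$ acting on $C([-T,0],\mathbb{C}^N)$; its nonzero eigenvalues are the Floquet multipliers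 of the delay equation, and the geometric multiplicity of an eigenvalue $\mu$ is $\dim\{\phi: \mu\phi=Y_1(T)\phi\}$. *)

theory Defs
  imports "HOL-Analysis.Analysis" "HOL-Library.Function_Algebras"
begin

definition cmat :: "real^'n^'m \<Rightarrow> complex^'n^'m" where
  "cmat M = (\<chi> i j. complex_of_real (M $ i $ j))"

definition fundamental_solution :: "(real \<Rightarrow> real^'n^'n) \<Rightarrow> real \<Rightarrow> real^'n^'n" where
  "fundamental_solution A = (THE Y. Y 0 = mat 1 \<and>
      (\<forall>t. (Y has_vector_derivative (A t ** Y t)) (at t)))"

definition monodromy_matrix :: "(real \<Rightarrow> real^'n^'n) \<Rightarrow> real \<Rightarrow> real^'n^'n" where
  "monodromy_matrix A T = fundamental_solution A T"

text \<open>y is a solution on [-T, infinity) of y'(t) = A(t) y(t) + K (y(t) - y(t-T)) with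
  initial history phi on [-T,0] (right derivative at t = 0). Values outside [-T,inf) are
  normalised to 0 so that the solution is a unique function.\<close>
definition dde_solution ::
  "(real \<Rightarrow> real^'n^'n) \<Rightarrow> real^'n^'n \<Rightarrow> real \<Rightarrow> (real \<Rightarrow> complex^'n) \<Rightarrow> (real \<Rightarrow> complex^'n) \<Rightarrow> bool"
  where
  "dde_solution A K T \<phi> y \<longleftrightarrow>
     (\<forall>t. t < -T \<longrightarrow> y t = 0) \<and>
     continuous_on {-T..} y \<and>
     (\<forall>\<theta>\<in>{-T..0}. y \<theta> = \<phi> \<theta>) \<and>
     (\<forall>t\<ge>0. (y has_vector_derivative
         (cmat (A t) *v y t + cmat K *v (y t - y (t - T)))) (at t within {0..}))"

definition dde_sol :: "(real \<Rightarrow> real^'n^'n) \<Rightarrow> real^'n^'n \<Rightarrow> real \<Rightarrow> (real \<Rightarrow> complex^'n) \<Rightarrow> real \<Rightarrow> complex^'n"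
  where "dde_sol A K T \<phi> = (THE y. dde_solution A K T \<phi> y)"

definition dde_solution_operator ::
  "(real \<Rightarrow> real^'n^'n) \<Rightarrow> real^'n^'n \<Rightarrow> real \<Rightarrow> real \<Rightarrow> (real \<Rightarrow> complex^'n) \<Rightarrow> (real \<Rightarrow> complex^'n)"
  where "dde_solution_operator A K T t \<phi> =
     (\<lambda>\<theta>. if \<theta> \<in> {-T..0} then dde_sol A K T \<phi> (t + \<theta>) else 0)"

definition phase_space :: "real \<Rightarrow> (real \<Rightarrow> complex^'n) set" where
  "phase_space T = {\<phi>. continuous_on {-T..0} \<phi> \<and> (\<forall>\<theta>. \<theta> \<notin> {-T..0} \<longrightarrow> \<phi> \<theta> = 0)}"

definition fscale :: "complex \<Rightarrow> (real \<Rightarrow> complex^'n) \<Rightarrow> (real \<Rightarrow> complex^'n)" where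
  "fscale c \<phi> = (\<lambda>\<theta>. c *s \<phi> \<theta>)"

definition matrix_eigenspace :: "real^'n^'n \<Rightarrow> complex \<Rightarrow> (complex^'n) set" where
  "matrix_eigenspace M \<mu> = {x. \<mu> *s x = cmat M *v x}"

definition operator_eigenspace ::
  "real \<Rightarrow> ((real \<Rightarrow> complex^'n) \<Rightarrow> (real \<Rightarrow> complex^'n)) \<Rightarrow> complex \<Rightarrow> (real \<Rightarrow> complex^'n) set" where
  "operator_eigenspace T U \<mu> = {\<phi>\<in>phase_space T. fscale \<mu> \<phi> = U \<phi>}"

definition geom_mult_matrix :: "real^'n^'n \<Rightarrow> complex \<Rightarrow> nat" where
  "geom_mult_matrix M \<mu> = vec.dim (matrix_eigenspace M \<mu>)"

definition geom_mult_operator ::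
  "real \<Rightarrow> ((real \<Rightarrow> complex^'n) \<Rightarrow> (real \<Rightarrow> complex^'n)) \<Rightarrow> complex \<Rightarrow> nat" where
  "geom_mult_operator T U \<mu> = vector_space.dim fscale (operator_eigenspace T U \<mu>)"

end

theory Submission
  imports Defs
begin


lemma bilinear_mm: "bilinear ((**) :: real^'n^'n \<Rightarrow> real^'n^'n \<Rightarrow> real^'n^'n)"
  unfolding bilinear_def
  by (auto intro!: linearI simp: vec_eq_iff matrix_matrix_mult_def sum_distrib_left
        sum.distrib distrib_left distrib_right mult.assoc mult.left_commute)

lemma bb_mm: "bounded_bilinear ((**) :: real^'n^'n \<Rightarrow> real^'n^'n \<Rightarrow> real^'n^'n)"
  using bilinear_mm bilinear_conv_bounded_bilinear by blast

lemma bilinear_mv: "bilinear ((*v) :: complex^'n^'n \<Rightarrow> complex^'n \<Rightarrow> complex^'n)"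
  unfolding bilinear_def
  by (auto intro!: linearI simp: vec_eq_iff matrix_vector_mult_def sum.distrib
        scaleR_right.sum distrib_left distrib_right)

lemma bb_mv: "bounded_bilinear ((*v) :: complex^'n^'n \<Rightarrow> complex^'n \<Rightarrow> complex^'n)"
  using bilinear_mv bilinear_conv_bounded_bilinear by blast

lemma cmat_mult: "cmat (A ** B) = cmat A ** cmat B"
  by (simp add: cmat_def vec_eq_iff matrix_matrix_mult_def)

lemma cmat_one: "cmat (mat 1) = mat 1"
  by (simp add: cmat_def vec_eq_iff mat_def)

lemma cmat_add: "cmat (A + B) = cmat A + cmat B"
  by (simp add: cmat_def vec_eq_iff)

lemma cmat_minus: "cmat (- A) = - cmat A"
  by (simp add: cmat_def vec_eq_iff)

lemma cmat_diff: "cmat (A - B) = cmat A - cmat B"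
  by (simp add: cmat_def vec_eq_iff)

lemma bl_cmat: "bounded_linear (cmat :: real^'n^'m \<Rightarrow> complex^'n^'m)"
proof -
  have "linear (cmat :: real^'n^'m \<Rightarrow> complex^'n^'m)"
    by (rule linearI) (simp_all add: cmat_def vec_eq_iff, simp add: scaleR_conv_of_real)
  then show ?thesis using linear_conv_bounded_linear by blast
qed

lemma continuous_on_cmat: "continuous_on S f \<Longrightarrow> continuous_on S (\<lambda>t. cmat (f t))"
  using bounded_linear.continuous_on[OF bl_cmat] by blast

lemma (in bounded_bilinear) vderiv:
  assumes "(f has_vector_derivative Df) (at x within s)" "(g has_vector_derivative Dg) (at x within s)"
  shows "((\<lambda>x. prod (f x) (g x)) has_vector_derivative (prod (f x) Dg + prod Df (g x))) (at x within s)"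
proof -
  have "((\<lambda>x. prod (f x) (g x)) has_derivative (\<lambda>h. prod (f x) (h *\<^sub>R Dg) + prod (h *\<^sub>R Df) (g x))) (at x within s)"
    using FDERIV[OF assms[unfolded has_vector_derivative_def]] by simp
  then show ?thesis unfolding has_vector_derivative_def
    by (simp add: scaleR_right scaleR_left scaleR_right_distrib)
qed

lemma bl_vderiv:
  assumes "bounded_linear L" "(f has_vector_derivative D) (at x within s)"
  shows "((\<lambda>x. L (f x)) has_vector_derivative L D) (at x within s)"
proof -
  have "((\<lambda>x. L (f x)) has_derivative (\<lambda>h. L (h *\<^sub>R D))) (at x within s)"
    using bounded_linear.has_derivative[OF assms(1) assms(2)[unfolded has_vector_derivative_def]] .
  then show ?thesis unfolding has_vector_derivative_def
    using assms(1) by (simp add: linear_simps)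
qed

lemma within_Ici_Icc:
  fixes t a b :: real
  assumes "a \<le> t" "t < b"
  shows "at t within {a..b} = at t within {a..}"
  by (rule at_within_nhd[of _ "{t - 1 <..< b}"]) (use assms in auto)

lemma vderiv_Icc_Ici:
  fixes t a b :: real
  assumes "(f has_vector_derivative D) (at t within {a..b})" "a \<le> t" "t < b"
  shows "(f has_vector_derivative D) (at t within {a..})"
  using assms within_Ici_Icc by metis

lemma cont_Ici:
  fixes a :: real
  assumes "\<And>R. R > a \<Longrightarrow> continuous_on {a..R} f"
  shows "continuous_on {a..} f"
  unfolding continuous_on_eq_continuous_within
proof
  fix t assume "t \<in> {a..}"
  then have "continuous (at t within {a..t+1}) f"
    using assms[of "t+1"] by (auto simp: continuous_on_eq_continuous_within)
  then show "continuous (at t within {a..}) f"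
    using within_Ici_Icc[of a t "t+1"] \<open>t \<in> {a..}\<close> by (simp add: continuous_within)
qed

lemma ftc0:
  fixes f :: "real \<Rightarrow> 'a::banach"
  assumes "continuous_on {a..} f" "a \<le> t"
  shows "((\<lambda>u. integral {a..u} f) has_vector_derivative f t) (at t within {a..})"
proof -
  have "((\<lambda>u. integral {a..u} f) has_vector_derivative f t) (at t within {a..t+1})"
    by (rule integral_has_vector_derivative) (use assms in \<open>auto intro: continuous_on_subset\<close>)
  then show ?thesis using vderiv_Icc_Ici assms by force
qed



primrec picard :: "(real \<Rightarrow> real^'n^'n) \<Rightarrow> nat \<Rightarrow> real \<Rightarrow> real^'n^'n" where
  "picard B 0 = (\<lambda>t. mat 1)"
| "picard B (Suc k) = (\<lambda>t. integral {0..t} (\<lambda>s. B s ** picard B k s))"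

lemma cont_integral0:
  fixes f :: "real \<Rightarrow> 'a::banach"
  assumes "continuous_on {a..} f"
  shows "continuous_on {a..} (\<lambda>u. integral {a..u} f)"
  unfolding continuous_on_eq_continuous_within
  using ftc0[OF assms] has_vector_derivative_continuous by fastforce

lemma picard_cont:
  assumes "continuous_on {0..} B"
  shows "continuous_on {0..} (picard B k)"
proof (induction k)
  case 0 then show ?case by simp
next
  case (Suc k)
  have "continuous_on {0..} (\<lambda>s. B s ** picard B k s)"
    using bounded_bilinear.continuous_on[OF bb_mm assms Suc] .
  then show ?case using cont_integral0 by simp
qed

lemma poly_integral:
  fixes C t :: real assumes "0 \<le> t"
  shows "((\<lambda>s. C * s^k / fact k) has_integral C * t^Suc k / fact (Suc k)) {0..t}"
proof -
  have "((\<lambda>s. C * s^Suc k / fact (Suc k)) has_vector_derivative C * s^k / fact k) (at s within {0..t})" for s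
  proof -
    have "((\<lambda>s. C * s^Suc k / fact (Suc k)) has_real_derivative C * (real (Suc k) * s^k) / fact (Suc k)) (at s within {0..t})"
      by (intro derivative_eq_intros) auto
    moreover have "C * (real (Suc k) * s^k) / fact (Suc k) = C * s^k / fact k"
      by (simp add: fact_Suc field_simps del: of_nat_Suc)
    ultimately show ?thesis by (simp add: has_real_derivative_iff_has_vector_derivative)
  qed
  from fundamental_theorem_of_calculus[OF assms this] show ?thesis by simp
qed

lemma picard_bound:
  fixes B :: "real \<Rightarrow> real^'n^'n"
  assumes cB: "continuous_on {0..} B"
    and Kb: "\<And>(a::real^'n^'n) (b::real^'n^'n). norm (a ** b) \<le> norm a * norm b * Kb" "Kb > 0"
    and M: "\<And>s. s \<in> {0..R} \<Longrightarrow> norm (B s) \<le> M" "M \<ge> 0"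
  shows "t \<in> {0..R} \<Longrightarrow> norm (picard B k t) \<le> norm (mat 1 :: real^'n^'n) * (Kb*M)^k * t^k / fact k"
proof (induction k arbitrary: t)
  case 0 then show ?case by simp
next
  case (Suc k)
  let ?c = "norm (mat 1 :: real^'n^'n)"
  have t: "0 \<le> t" "t \<le> R" using Suc.prems by auto
  have ci: "continuous_on {0..t} (\<lambda>s. B s ** picard B k s)"
    using bounded_bilinear.continuous_on[OF bb_mm cB picard_cont[OF cB]] by (rule continuous_on_subset) auto
  have "norm (picard B (Suc k) t) \<le> integral {0..t} (\<lambda>s. (Kb*M) * (?c * (Kb*M)^k) * s^k / fact k)"
    unfolding picard.simps
  proof (rule Henstock_Kurzweil_Integration.integral_norm_bound_integral)
    show "(\<lambda>s. B s ** picard B k s) integrable_on {0..t}" using ci integrable_continuous_real by blast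
    show "(\<lambda>s. (Kb*M) * (?c * (Kb*M)^k) * s^k / fact k) integrable_on {0..t}"
      using poly_integral[OF t(1)] by blast
    fix s assume s: "s \<in> {0..t}"
    have "norm (B s ** picard B k s) \<le> norm (B s) * norm (picard B k s) * Kb" using Kb(1)[of "B s" "picard B k s"] by simp
    also have "\<dots> \<le> M * (?c * (Kb*M)^k * s^k / fact k) * Kb"
      using s t M Suc.IH[of s] Kb(2) by (intro mult_right_mono mult_mono) auto
    finally show "norm (B s ** picard B k s) \<le> (Kb*M) * (?c * (Kb*M)^k) * s^k / fact k"
      by (simp add: field_simps)
  qed
  also have "\<dots> = (Kb*M) * (?c * (Kb*M)^k) * t^Suc k / fact (Suc k)"
    using poly_integral[OF t(1)] by (rule integral_unique)
  finally show ?case by (simp add: field_simps)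
qed

lemma picard_series:
  fixes B :: "real \<Rightarrow> real^'n^'n"
  assumes cB: "continuous_on {0..} B" and R: "R \<ge> 0"
  shows "continuous_on {0..R} (\<lambda>t. \<Sum>k. picard B k t)"
    "\<And>t. t \<in> {0..R} \<Longrightarrow> (\<Sum>k. picard B k t) = mat 1 + integral {0..t} (\<lambda>s. B s ** (\<Sum>k. picard B k s))"
proof -
  define Y where "Y t = (\<Sum>k. picard B k t)" for t
  define S where "S n t = (\<Sum>i<n. picard B i t)" for n t
  obtain Kb where Kb: "\<And>(a::real^'n^'n) (b::real^'n^'n). norm (a ** b) \<le> norm a * norm b * Kb" "Kb > 0"
    using bounded_bilinear.pos_bounded[OF bb_mm] by blast
  have "bounded (B ` {0..R})"
    by (rule compact_imp_bounded, rule compact_continuous_image) (use cB in \<open>auto intro: continuous_on_subset\<close>)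
  then obtain M where M: "\<And>s. s \<in> {0..R} \<Longrightarrow> norm (B s) \<le> M" "M > 0"
    unfolding bounded_pos by (metis atLeastAtMost_iff image_eqI)
  let ?c = "norm (mat 1 :: real^'n^'n)"
  have U: "uniform_limit {0..R} S Y sequentially"
    unfolding S_def Y_def
  proof (rule Weierstrass_m_test)
    fix n t assume t: "t \<in> {0..R}"
    have "norm (picard B n t) \<le> ?c * (Kb*M)^n * t^n / fact n"
      using picard_bound[OF cB Kb M(1) _ t] M(2) by auto
    also have "\<dots> \<le> ?c * (inverse (fact n) * (Kb*M*R)^n)"
      using t Kb M by (auto simp: field_simps power_mult_distrib intro!: mult_left_mono power_mono mult_right_mono)
    finally show "norm (picard B n t) \<le> ?c * (inverse (fact n) * (Kb*M*R)^n)" .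
  next
    show "summable (\<lambda>n. ?c * (inverse (fact n) * (Kb*M*R)^n))"
      by (intro summable_mult summable_exp)
  qed
  have cS: "continuous_on {0..R} (S n)" for n
    unfolding S_def using picard_cont[OF cB]
    by (intro continuous_on_sum) (meson atLeastAtMost_iff atLeast_iff continuous_on_subset subsetI)
  show cY: "continuous_on {0..R} (\<lambda>t. \<Sum>k. picard B k t)"
    using uniform_limit_theorem[OF _ U] cS unfolding Y_def by auto
  fix t assume t: "t \<in> {0..R}"
  have cBt: "continuous_on {0..t} B" using cB by (rule continuous_on_subset) auto
  have cPt: "continuous_on {0..t} (picard B i)" for i using picard_cont[OF cB] by (rule continuous_on_subset) auto
  have eqn: "S (Suc n) t = mat 1 + integral {0..t} (\<lambda>s. B s ** S n s)" for n
  proof -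
    have "S (Suc n) t = mat 1 + (\<Sum>i<n. integral {0..t} (\<lambda>s. B s ** picard B i s))"
      unfolding S_def by (subst sum.lessThan_Suc_shift) simp
    also have "(\<Sum>i<n. integral {0..t} (\<lambda>s. B s ** picard B i s)) = integral {0..t} (\<lambda>s. \<Sum>i<n. B s ** picard B i s)"
      by (rule Henstock_Kurzweil_Integration.integral_sum[symmetric])
        (auto intro!: integrable_continuous_real bounded_bilinear.continuous_on[OF bb_mm cBt cPt])
    also have "(\<lambda>s. \<Sum>i<n. B s ** picard B i s) = (\<lambda>s. B s ** S n s)"
      unfolding S_def by (simp add: bounded_bilinear.sum_right[OF bb_mm])
    finally show ?thesis .
  qed
  have Ut: "uniform_limit {0..t} S Y sequentially"
    using U by (rule uniform_limit_on_subset) (use t in auto)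
  have cYt: "continuous_on {0..t} Y" using cY unfolding Y_def[abs_def] by (rule continuous_on_subset) (use t in auto)
  have "uniform_limit {0..t} (\<lambda>n s. B s ** S n s) (\<lambda>s. B s ** Y s) sequentially"
    by (rule bounded_bilinear.bounded_uniform_limit[OF bb_mm uniform_limit_const Ut])
      (auto intro!: compact_imp_bounded compact_continuous_image cBt cYt)
  then obtain I J where IJ: "\<And>n. ((\<lambda>s. B s ** S n s) has_integral I n) {0..t}"
    "((\<lambda>s. B s ** Y s) has_integral J) {0..t}" "I \<longlonglongrightarrow> J"
    by (rule uniform_limit_integral)
      (use t in \<open>auto intro!: bounded_bilinear.continuous_on[OF bb_mm cBt] continuous_on_subset[OF cS]\<close>)
  have "(\<lambda>n. S (Suc n) t) \<longlonglongrightarrow> mat 1 + J"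
  proof -
    have "(\<lambda>n. integral {0..t} (\<lambda>s. B s ** S n s)) = I" using IJ(1) integral_unique by blast
    then show ?thesis unfolding eqn using IJ(3) by (simp add: tendsto_add)
  qed
  moreover have "(\<lambda>n. S (Suc n) t) \<longlonglongrightarrow> Y t"
    using tendsto_uniform_limitI[OF U t] by (rule LIMSEQ_Suc)
  ultimately have "Y t = mat 1 + J" using LIMSEQ_unique by blast
  then show "(\<Sum>k. picard B k t) = mat 1 + integral {0..t} (\<lambda>s. B s ** (\<Sum>k. picard B k s))"
    using IJ(2) unfolding Y_def by (simp add: integral_unique)
qed

lemma ode_exists_pos:
  fixes B :: "real \<Rightarrow> real^'n^'n"
  assumes cB: "continuous_on {0..} B"
  shows "\<exists>Y. Y 0 = mat 1 \<and> continuous_on {0..} Y \<and>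
     (\<forall>t\<ge>0. (Y has_vector_derivative B t ** Y t) (at t within {0..}))"
proof -
  define Y where "Y t = (\<Sum>k. picard B k t)" for t
  have cY: "continuous_on {0..} Y"
    unfolding Y_def by (rule cont_Ici) (use picard_series(1)[OF cB] in auto)
  have eq: "Y t = mat 1 + integral {0..t} (\<lambda>s. B s ** Y s)" if "t \<ge> 0" for t
    unfolding Y_def using picard_series(2)[OF cB, of t t] that by auto
  have "(Y has_vector_derivative B t ** Y t) (at t within {0..})" if t: "t \<ge> 0" for t
  proof -
    have "((\<lambda>u. mat 1 + integral {0..u} (\<lambda>s. B s ** Y s)) has_vector_derivative B t ** Y t) (at t within {0..})"
      using has_vector_derivative_add[OF has_vector_derivative_const
          ftc0[OF bounded_bilinear.continuous_on[OF bb_mm cB cY] t]] by simp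
    then show ?thesis
      by (rule has_vector_derivative_transform[rotated 2]) (use t eq in auto)
  qed
  moreover have "Y 0 = mat 1" using eq[of 0] by simp
  ultimately show ?thesis using cY by blast
qed



lemma vd_union:
  assumes "(f has_vector_derivative D) (at x within S)" "(f has_vector_derivative D) (at x within T)"
  shows "(f has_vector_derivative D) (at x within S \<union> T)"
  using assms unfolding has_vector_derivative_def has_derivative_within
  by (auto simp: at_within_union intro: filterlim_sup)

lemma ode_exists:
  fixes B :: "real \<Rightarrow> real^'n^'n"
  assumes cB: "continuous_on UNIV B"
  shows "\<exists>Y. Y 0 = mat 1 \<and> (\<forall>t. (Y has_vector_derivative B t ** Y t) (at t))"
proof -
  obtain Z1 where Z1: "Z1 0 = mat 1" "\<And>t. t \<ge> 0 \<Longrightarrow> (Z1 has_vector_derivative B t ** Z1 t) (at t within {0..})"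
    using ode_exists_pos[of B] cB by (meson continuous_on_subset subset_UNIV)
  have "continuous_on {0..} (\<lambda>s. - B (- s))"
    by (intro continuous_intros continuous_on_compose2[OF cB]) auto
  then obtain Z2 where Z2: "Z2 0 = mat 1" "\<And>t. t \<ge> 0 \<Longrightarrow> (Z2 has_vector_derivative - B (- t) ** Z2 t) (at t within {0..})"
    using ode_exists_pos[of "\<lambda>s. - B (- s)"] by blast
  define Y where "Y t = (if t \<ge> 0 then Z1 t else Z2 (- t))" for t
  have d1: "(Y has_vector_derivative B t ** Y t) (at t within {0..})" if "t \<ge> 0" for t
  proof -
    have "(Y has_vector_derivative B t ** Z1 t) (at t within {0..})"
      by (rule has_vector_derivative_transform[OF _ _ Z1(2)[OF that]]) (use that in \<open>auto simp: Y_def\<close>)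
    then show ?thesis using that by (simp add: Y_def)
  qed
  have d2: "(Y has_vector_derivative B t ** Y t) (at t within {..0})" if "t \<le> 0" for t
  proof -
    have "(uminus has_vector_derivative -1) (at t within {..0})"
      by (rule derivative_eq_intros refl)+
    moreover have "(Z2 has_vector_derivative - B (- (- t)) ** Z2 (- t)) (at (- t) within uminus ` {..0})"
      using Z2(2)[of "- t"] that by simp
    ultimately have "((Z2 \<circ> uminus) has_vector_derivative (-1) *\<^sub>R (- B (- (- t)) ** Z2 (- t))) (at t within {..0})"
      by (rule vector_diff_chain_within)
    then have "((\<lambda>s. Z2 (- s)) has_vector_derivative B t ** Z2 (- t)) (at t within {..0})"
      by (simp add: o_def bounded_bilinear.minus_left[OF bb_mm])
    then have "(Y has_vector_derivative B t ** Z2 (- t)) (at t within {..0})"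
      by (rule has_vector_derivative_transform[rotated 2]) (use that Z1 Z2 in \<open>auto simp: Y_def\<close>)
    moreover have "Y t = Z2 (- t)" using that Z1 Z2 by (auto simp: Y_def)
    ultimately show ?thesis by simp
  qed
  have "(Y has_vector_derivative B t ** Y t) (at t)" for t
  proof (cases "t = 0")
    case True
    have "{0::real..} \<union> {..0} = UNIV" by auto
    then show ?thesis using vd_union[OF d1 d2, of t] by (simp add: True)
  next
    case False
    show ?thesis
    proof (cases "t > 0")
      case True
      then have "at t within {0..} = at t" by (intro at_within_interior) auto
      then show ?thesis using d1[of t] True by simp
    next
      case False
      then have "t < 0" using \<open>t \<noteq> 0\<close> by auto
      then have "at t within {..0} = at t" by (intro at_within_interior) auto
      then show ?thesis using d2[of t] \<open>t < 0\<close> by simp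
    qed
  qed
  moreover have "Y 0 = mat 1" using Z1 by (simp add: Y_def)
  ultimately show ?thesis by blast
qed

lemma bl_transpose: "bounded_linear (transpose :: real^'n^'n \<Rightarrow> real^'n^'n)"
proof -
  have "linear (transpose :: real^'n^'n \<Rightarrow> real^'n^'n)"
    by (rule linearI) (simp_all add: transpose_def vec_eq_iff)
  then show ?thesis using linear_conv_bounded_linear by blast
qed

lemma transpose_neg: "transpose (- A) = - transpose (A::real^'n^'n)"
  by (simp add: transpose_def vec_eq_iff)

definition fundpair :: "(real \<Rightarrow> real^'n^'n) \<Rightarrow> (real \<Rightarrow> real^'n^'n) \<Rightarrow> (real \<Rightarrow> real^'n^'n) \<Rightarrow> bool" where
  "fundpair B Y W \<longleftrightarrow> Y 0 = mat 1 \<and> (\<forall>t. (Y has_vector_derivative B t ** Y t) (at t)) \<and>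
    (\<forall>t. (W has_vector_derivative - (W t ** B t)) (at t)) \<and>
    (\<forall>t. W t ** Y t = mat 1) \<and> (\<forall>t. Y t ** W t = mat 1) \<and>
    fundamental_solution B = Y \<and>
    (\<forall>Z::real \<Rightarrow> real^'n^'n. (\<forall>t. (Z has_vector_derivative B t ** Z t) (at t)) \<longrightarrow> (\<forall>t. Z t = Y t ** Z 0))"

lemma fund_ex:
  fixes B :: "real \<Rightarrow> real^'n^'n"
  assumes cB: "continuous_on UNIV B"
  shows "\<exists>Y W. fundpair B Y W"
proof -
  obtain Y where Y: "Y 0 = mat 1" "\<And>t. (Y has_vector_derivative B t ** Y t) (at t)"
    using ode_exists[OF cB] by blast
  have "continuous_on UNIV (\<lambda>t. - transpose (B t))"
    by (intro continuous_intros bounded_linear.continuous_on[OF bl_transpose] cB)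
  then obtain V where V: "V 0 = mat 1" "\<And>t. (V has_vector_derivative - transpose (B t) ** V t) (at t)"
    using ode_exists by blast
  define W where "W t = transpose (V t)" for t
  have W: "(W has_vector_derivative - (W t ** B t)) (at t)" for t
    using bl_vderiv[OF bl_transpose V(2)[of t]] unfolding W_def
    by (simp add: matrix_transpose_mul transpose_neg bounded_bilinear.minus_left[OF bb_mm])
  have W0: "W 0 = mat 1" by (simp add: W_def V)
  have WZ': "W t ** Z t = Z 0" if Z: "\<And>t. (Z has_vector_derivative B t ** Z t) (at t)" for Z :: "real \<Rightarrow> real^'n^'n" and t
  proof -
    have "((\<lambda>t. W t ** Z t) has_vector_derivative 0) (at t within UNIV)" for t
      using bounded_bilinear.vderiv[OF bb_mm W[of t] Z[of t]]
      by (simp add: matrix_mul_assoc bounded_bilinear.minus_left[OF bb_mm])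
    then obtain c where "\<And>t. W t ** Z t = c" using has_vector_derivative_zero_constant[of UNIV] by auto
    then show ?thesis using W0 by (metis matrix_mul_lid)
  qed
  have WZ: "W t ** Z t = mat 1" if Z: "Z 0 = mat 1" "\<And>t. (Z has_vector_derivative B t ** Z t) (at t)" for Z :: "real \<Rightarrow> real^'n^'n" and t
    using WZ'[OF Z(2)] Z(1) by simp
  have WY: "W t ** Y t = mat 1" for t using WZ[OF Y] .
  then have YW: "Y t ** W t = mat 1" for t using matrix_left_right_inverse by blast
  have rep: "Z t = Y t ** Z 0" if Z: "\<And>t. (Z has_vector_derivative B t ** Z t) (at t)" for Z :: "real \<Rightarrow> real^'n^'n" and t
  proof -
    have "Z t = (Y t ** W t) ** Z t" by (simp add: YW)
    also have "\<dots> = Y t ** Z 0" using WZ'[OF Z, of t] by (simp add: matrix_mul_assoc[symmetric])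
    finally show ?thesis .
  qed
  have "fundamental_solution B = Y"
    unfolding fundamental_solution_def
  proof (rule the_equality)
    show "Y 0 = mat 1 \<and> (\<forall>t. (Y has_vector_derivative B t ** Y t) (at t))" using Y by blast
    fix Z assume Z: "Z 0 = mat 1 \<and> (\<forall>t. (Z has_vector_derivative B t ** Z t) (at t))"
    show "Z = Y"
    proof
      fix t
      have "Z t = (Y t ** W t) ** Z t" by (simp add: YW)
      also have "\<dots> = Y t" using WZ[of Z t] Z by (simp add: matrix_mul_assoc[symmetric])
      finally show "Z t = Y t" .
    qed
  qed
  then have "fundpair B Y W" unfolding fundpair_def using Y W WY YW rep by blast
  then show ?thesis by blast
qed

lemma fp:
  assumes "fundpair B Y W"
  shows "Y 0 = mat 1" "\<And>t. (Y has_vector_derivative B t ** Y t) (at t)"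
    "\<And>t. (W has_vector_derivative - (W t ** B t)) (at t)"
    "\<And>t. W t ** Y t = mat 1" "\<And>t. Y t ** W t = mat 1"
    "fundamental_solution B = Y"
    "\<And>(Z::real \<Rightarrow> real^'n^'n) t. (\<And>t. (Z has_vector_derivative B t ** Z t) (at t)) \<Longrightarrow> Z t = Y t ** Z 0"
  using assms unfolding fundpair_def by blast+

lemma cmat_mv_minus: "cmat (- M) *v x = - (cmat M *v x)" for M :: "real^'n^'n"
  unfolding cmat_minus by (rule bounded_bilinear.minus_left[OF bb_mv])

lemma complex_const:
  fixes B W :: "real \<Rightarrow> real^'n^'n" and z :: "real \<Rightarrow> complex^'n"
  assumes W: "\<And>t. (W has_vector_derivative - (W t ** B t)) (at t)"
    and z: "\<And>t. t \<in> {a..b} \<Longrightarrow> (z has_vector_derivative cmat (B t) *v z t) (at t within {a..b})"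
    and t: "t \<in> {a..b}"
  shows "cmat (W t) *v z t = cmat (W a) *v z a"
proof -
  have "((\<lambda>t. cmat (W t) *v z t) has_vector_derivative 0) (at t within {a..b})" if "t \<in> {a..b}" for t
  proof -
    have cW: "((\<lambda>t. cmat (W t)) has_vector_derivative cmat (- (W t ** B t))) (at t within {a..b})"
      using bl_vderiv[OF bl_cmat has_vector_derivative_at_within[OF W[of t]]] .
    have e: "cmat (W t) *v (cmat (B t) *v z t) + cmat (- (W t ** B t)) *v z t = 0"
      unfolding cmat_mv_minus cmat_mult matrix_vector_mul_assoc by simp
    show ?thesis
      using bounded_bilinear.vderiv[OF bb_mv cW z[OF that]] unfolding e .
  qed
  then obtain c where "\<And>t. t \<in> {a..b} \<Longrightarrow> cmat (W t) *v z t = c"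
    using has_vector_derivative_zero_constant[of "{a..b}"] convex_real_interval(5) by blast
  then show ?thesis using t by (metis atLeastAtMost_iff order.trans order.refl)
qed



lemma inv_apply:
  fixes Y W :: "real^'n^'n" and x :: "complex^'n"
  assumes "Y ** W = mat 1"
  shows "cmat Y *v (cmat W *v x) = x"
  by (simp add: matrix_vector_mul_assoc cmat_mult[symmetric] assms cmat_one)

lemma dde_unique:
  fixes A :: "real \<Rightarrow> real^'n^'n"
  assumes cA: "continuous_on UNIV A" and T: "T > 0"
    and y1: "dde_solution A K T \<phi> y1" and y2: "dde_solution A K T \<phi> y2"
  shows "y1 = y2"
proof -
  have cB: "continuous_on UNIV (\<lambda>t. A t + K)" by (intro continuous_intros cA)
  obtain Yb Wb where F: "fundpair (\<lambda>t. A t + K) Yb Wb" using fund_ex[OF cB] by blast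
  note Yb = fp(3,4,5)[OF F]
  define d where "d t = y1 t - y2 t" for t
  have y1c: "\<And>t. t < -T \<Longrightarrow> y1 t = 0" "\<And>t. t \<in> {-T..0} \<Longrightarrow> y1 t = \<phi> t"
    "\<And>t. t \<ge> 0 \<Longrightarrow> (y1 has_vector_derivative (cmat (A t) *v y1 t + cmat K *v (y1 t - y1 (t - T)))) (at t within {0..})"
    using y1 unfolding dde_solution_def by blast+
  have y2c: "\<And>t. t < -T \<Longrightarrow> y2 t = 0" "\<And>t. t \<in> {-T..0} \<Longrightarrow> y2 t = \<phi> t"
    "\<And>t. t \<ge> 0 \<Longrightarrow> (y2 has_vector_derivative (cmat (A t) *v y2 t + cmat K *v (y2 t - y2 (t - T)))) (at t within {0..})"
    using y2 unfolding dde_solution_def by blast+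
  have dneg: "d t = 0" if "t \<le> 0" for t
  proof (cases "t < - T")
    case True then show ?thesis using y1c y2c by (simp add: d_def)
  next
    case False then show ?thesis using y1c y2c that by (simp add: d_def)
  qed
  have dd: "(d has_vector_derivative cmat (A t) *v d t + cmat K *v (d t - d (t - T))) (at t within {0..})"
    if "t \<ge> 0" for t
  proof -
    have "(d has_vector_derivative
        (cmat (A t) *v y1 t + cmat K *v (y1 t - y1 (t - T))) - (cmat (A t) *v y2 t + cmat K *v (y2 t - y2 (t - T))))
        (at t within {0..})"
      unfolding d_def[abs_def] using y1c(3)[OF that] y2c(3)[OF that] by (rule has_vector_derivative_diff)
    moreover have "(cmat (A t) *v y1 t + cmat K *v (y1 t - y1 (t - T))) - (cmat (A t) *v y2 t + cmat K *v (y2 t - y2 (t - T)))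
       = cmat (A t) *v d t + cmat K *v (d t - d (t - T))"
      unfolding d_def by (simp add: matrix_vector_mult_diff_distrib)
    ultimately show ?thesis by simp
  qed
  have step: "\<forall>t\<in>{0..real n * T}. d t = 0" for n
  proof (induction n)
    case 0 then show ?case using dneg by auto
  next
    case (Suc n)
    let ?R = "real (Suc n) * T"
    have dT: "d (t - T) = 0" if "t \<in> {0..?R}" for t
    proof (cases "t - T \<le> 0")
      case True then show ?thesis using dneg by auto
    next
      case False then show ?thesis using Suc.IH that by (auto simp: algebra_simps)
    qed
    have "(d has_vector_derivative cmat (A t + K) *v d t) (at t within {0..?R})" if t: "t \<in> {0..?R}" for t
    proof -
      have "(d has_vector_derivative cmat (A t) *v d t + cmat K *v (d t - d (t - T))) (at t within {0..?R})"
        using dd[of t] t by (auto intro: has_vector_derivative_within_subset)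
      then show ?thesis using dT[OF t] by (simp add: cmat_add matrix_vector_mult_add_rdistrib)
    qed
    then have "cmat (Wb t) *v d t = cmat (Wb 0) *v d 0" if "t \<in> {0..?R}" for t
      using complex_const[OF Yb(1)] that by blast
    then have "cmat (Wb t) *v d t = 0" if "t \<in> {0..?R}" for t
      using that dneg[of 0] by simp
    then show ?case
    proof (intro ballI)
      fix t assume "t \<in> {0..?R}"
      then have "cmat (Wb t) *v d t = 0" using \<open>\<And>t. t \<in> {0..?R} \<Longrightarrow> cmat (Wb t) *v d t = 0\<close> by blast
      then show "d t = 0" using inv_apply[OF Yb(3), of t "d t"] by simp
    qed
  qed
  have "d t = 0" for t
  proof (cases "t \<le> 0")
    case True then show ?thesis using dneg by auto
  next
    case False
    obtain n where "t < real n * T" using reals_Archimedean3[OF T] by blast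
    then show ?thesis using step[of n] False by auto
  qed
  then show ?thesis unfolding d_def by auto
qed

lemma dde_sol_eq:
  fixes A :: "real \<Rightarrow> real^'n^'n"
  assumes cA: "continuous_on UNIV A" and T: "T > 0" and y: "dde_solution A K T \<phi> y"
  shows "dde_sol A K T \<phi> = y"
  unfolding dde_sol_def using y dde_unique[OF cA T _ y] by (intro the_equality) blast+



lemma cont_integral_Icc:
  fixes f :: "real \<Rightarrow> 'a::banach"
  assumes "continuous_on {a..b} f"
  shows "continuous_on {a..b} (\<lambda>u. integral {a..u} f)"
  unfolding continuous_on_eq_continuous_within
  using integral_has_vector_derivative[OF assms] has_vector_derivative_continuous by blast

lemma vd_cont: "(\<And>t. (Y has_vector_derivative D t) (at t)) \<Longrightarrow> continuous_on S Y"
  by (meson continuous_at_imp_continuous_on has_vector_derivative_continuous)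

lemma dde_exists:
  fixes A :: "real \<Rightarrow> real^'n^'n" and \<phi> :: "real \<Rightarrow> complex^'n"
  assumes cA: "continuous_on UNIV A" and T: "T > 0" and \<phi>: "\<phi> \<in> phase_space T"
  shows "\<exists>y. dde_solution A K T \<phi> y"
proof -
  have cB: "continuous_on UNIV (\<lambda>t. A t + K)" by (intro continuous_intros cA)
  obtain Yb Wb where F: "fundpair (\<lambda>t. A t + K) Yb Wb" using fund_ex[OF cB] by blast
  have \<phi>c: "continuous_on {-T..0} \<phi>" "\<And>\<theta>. \<theta> \<notin> {-T..0} \<Longrightarrow> \<phi> \<theta> = 0"
    using \<phi> unfolding phase_space_def by auto
  have cYb: "continuous_on S (\<lambda>t. cmat (Yb t))" for S
    by (rule continuous_on_cmat[OF vd_cont[OF fp(2)[OF F]]])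
  have cWb: "continuous_on S (\<lambda>t. cmat (Wb t))" for S
    by (rule continuous_on_cmat[OF vd_cont[OF fp(3)[OF F]]])
  define g where "g h s = cmat (Wb s) *v (- (cmat K *v h (s - T)))" for h :: "real \<Rightarrow> complex^'n" and s
  define F' where "F' h t = cmat (Yb t) *v (\<phi> 0 + integral {0..t} (g h))" for h t
  define \<Phi> where "\<Phi> h t = (if t < -T then 0 else if t \<le> 0 then \<phi> t else F' h t)" for h t
  define hs where "hs n = (\<Phi> ^^ n) \<phi>" for n
  have hsS: "hs (Suc n) = \<Phi> (hs n)" for n by (simp add: hs_def)
  have F0: "F' h 0 = \<phi> 0" for h by (simp add: F'_def fp(1)[OF F] cmat_one)
  have agree: "\<forall>t. t \<le> real n * T \<longrightarrow> hs (Suc n) t = hs n t" for n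
  proof (induction n)
    case 0 show ?case
      by (auto simp: hsS \<Phi>_def hs_def \<phi>c(2))
  next
    case (Suc n)
    show ?case
    proof (intro allI impI)
      fix t assume t: "t \<le> real (Suc n) * T"
      have "integral {0..t} (g (hs (Suc n))) = integral {0..t} (g (hs n))"
      proof (rule integral_cong)
        fix s assume "s \<in> {0..t}"
        then have "s - T \<le> real n * T" using t by (auto simp: algebra_simps)
        then show "g (hs (Suc n)) s = g (hs n) s" using Suc.IH by (simp add: g_def)
      qed
      then show "hs (Suc (Suc n)) t = hs (Suc n) t"
        by (simp add: hsS[of "Suc n"] hsS[of n] \<Phi>_def F'_def)
    qed
  qed
  have mono_agree: "hs m t = hs n t" if "n \<le> m" "t \<le> real n * T" for n m t
    using that(1)
  proof (induction m rule: dec_induct)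
    case base then show ?case by simp
  next
    case (step m)
    have "real n * T \<le> real m * T" using step(1) T by (intro mult_right_mono) auto
    then have "t \<le> real m * T" using that(2) by linarith
    then show ?case using agree[of m] step by simp
  qed
  have gc: "continuous_on {0..real (Suc m) * T} (g h)" if h: "continuous_on {-T..real m * T} h" for h m
  proof -
    have "continuous_on {0..real (Suc m) * T} (\<lambda>s. h (s - T))"
      by (rule continuous_on_compose2[OF h]) (auto intro!: continuous_intros simp: algebra_simps)
    then have "continuous_on {0..real (Suc m) * T} (\<lambda>s. - (cmat K *v h (s - T)))"
      by (intro continuous_intros bounded_linear.continuous_on[OF matrix_vector_mul_bounded_linear])
    then show ?thesis unfolding g_def
      by (rule bounded_bilinear.continuous_on[OF bb_mv cWb])
  qed
  have Fc: "continuous_on {0..real (Suc m) * T} (F' h)" if h: "continuous_on {-T..real m * T} h" for h m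
    unfolding F'_def
    by (rule bounded_bilinear.continuous_on[OF bb_mv cYb])
      (intro continuous_intros cont_integral_Icc gc[OF h])
  have hsF: "hs (Suc m) t = F' (hs m) t" if "t \<ge> 0" for m t
    using that T by (cases "t = 0") (auto simp: hsS \<Phi>_def F0)
  have cont: "continuous_on {-T..real n * T} (hs n)" for n
  proof (induction n)
    case 0 then show ?case using \<phi>c by (simp add: hs_def)
  next
    case (Suc n)
    let ?R = "real (Suc n) * T"
    have c1: "continuous_on {-T..0} (hs (Suc n))"
      using \<phi>c(1) by (rule continuous_on_eq) (auto simp: hsS \<Phi>_def)
    have c2: "continuous_on {0..?R} (hs (Suc n))"
      using Fc[OF Suc.IH] by (rule continuous_on_eq) (auto simp: hsF)
    have "0 \<le> ?R" using T by simp
    then have "{-T..0} \<union> {0..?R} = {-T..?R}" using T by (intro ivl_disj_un_two_touch(4)) auto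
    then show ?case using continuous_on_closed_Un[OF _ _ c1 c2] by simp
  qed
  define N where "N t = nat \<lceil>t / T\<rceil>" for t
  have N: "t \<le> real (N t) * T" for t
  proof (cases "t \<le> 0")
    case True
    have "0 \<le> real (N t) * T" using T by simp
    then show ?thesis using True by linarith
  next
    case False
    have pos: "0 < t / T" using False T by simp
    have "t / T \<le> of_int \<lceil>t / T\<rceil>" by (rule le_of_int_ceiling)
    also have "of_int \<lceil>t / T\<rceil> = real (N t)" unfolding N_def using pos by simp
    finally have "t / T \<le> real (N t)" .
    then show ?thesis using T by (simp add: pos_divide_le_eq)
  qed
  define y where "y t = hs (N t) t" for t
  have yh: "y t = hs n t" if "t \<le> real n * T" for n t
  proof -
    have m: "t \<le> real (min n (N t)) * T" using that N[of t] by (simp add: min_def)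
    show ?thesis unfolding y_def
      using mono_agree[OF _ m, of "N t"] mono_agree[OF _ m, of n] by simp
  qed
  have "dde_solution A K T \<phi> y"
    unfolding dde_solution_def
  proof (intro conjI allI impI ballI)
    fix t :: real assume "t < - T"
    then show "y t = 0" using yh[of t 0] T \<phi>c(2) by (simp add: hs_def)
  next
    show "continuous_on {-T..} y"
    proof (rule cont_Ici)
      fix R assume "R > - T"
      obtain n where n: "R < real n * T" using reals_Archimedean3[OF T] by blast
      have "continuous_on {-T..R} (hs n)" using cont[of n] by (rule continuous_on_subset) (use n in auto)
      moreover have "hs n x = y x" if "x \<in> {-T..R}" for x using yh[of x n] that n by simp
      ultimately show "continuous_on {-T..R} y" by (rule continuous_on_eq)
    qed
  next
    fix \<theta> assume "\<theta> \<in> {-T..0}"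
    then show "y \<theta> = \<phi> \<theta>" using yh[of \<theta> 0] by (simp add: hs_def)
  next
    fix t :: real assume t: "t \<ge> 0"
    obtain n where n: "t < real n * T" using reals_Archimedean3[OF T] by blast
    then obtain m where m: "n = Suc m" using t T by (cases n) auto
    let ?R = "real (Suc m) * T"
    have tR: "t < ?R" using n m by simp
    have cYd: "((\<lambda>t. cmat (Yb t)) has_vector_derivative cmat ((A t + K) ** Yb t)) (at t within {0..?R})"
      using bl_vderiv[OF bl_cmat has_vector_derivative_at_within[OF fp(2)[OF F]]] .
    have cI: "((\<lambda>u. \<phi> 0 + integral {0..u} (g (hs m))) has_vector_derivative g (hs m) t) (at t within {0..?R})"
      using has_vector_derivative_add[OF has_vector_derivative_const
        integral_has_vector_derivative[OF gc[OF cont[of m]]]] t tR by simp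
    have d: "(F' (hs m) has_vector_derivative
        cmat (Yb t) *v g (hs m) t + cmat ((A t + K) ** Yb t) *v (\<phi> 0 + integral {0..t} (g (hs m))))
        (at t within {0..?R})"
      unfolding F'_def[abs_def] by (rule bounded_bilinear.vderiv[OF bb_mv cYd cI])
    have yt: "y t = F' (hs m) t" using yh[of t "Suc m"] tR hsF[OF t] by simp
    have ytT: "y (t - T) = hs m (t - T)" using yh[of "t - T" m] tR by (simp add: algebra_simps)
    have "cmat (Yb t) *v g (hs m) t + cmat ((A t + K) ** Yb t) *v (\<phi> 0 + integral {0..t} (g (hs m)))
        = cmat (A t) *v y t + cmat K *v (y t - y (t - T))"
      unfolding yt ytT g_def F'_def
      by (simp add: inv_apply[OF fp(5)[OF F]] cmat_mult cmat_add matrix_vector_mul_assoc[symmetric]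
          matrix_vector_mult_add_rdistrib matrix_vector_mult_diff_distrib)
    then have "(F' (hs m) has_vector_derivative cmat (A t) *v y t + cmat K *v (y t - y (t - T))) (at t within {0..?R})"
      using d by simp
    moreover have yF: "y x = F' (hs m) x" if "x \<in> {0..?R}" for x
      using yh[of x "Suc m"] hsF[of x m] that by simp
    ultimately have "(y has_vector_derivative cmat (A t) *v y t + cmat K *v (y t - y (t - T))) (at t within {0..?R})"
      by (intro has_vector_derivative_transform[of t "{0..?R}" y "F' (hs m)"]) (use t tR yF in auto)
    then show "(y has_vector_derivative cmat (A t) *v y t + cmat K *v (y t - y (t - T))) (at t within {0..})"
      using vderiv_Icc_Ici t tR by blast
  qed
  then show ?thesis by blast
qed



lemma vs_fscale: "vector_space (fscale :: complex \<Rightarrow> (real \<Rightarrow> complex^'n) \<Rightarrow> _)"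
  by unfold_locales (auto simp: fscale_def fun_eq_iff vector_add_ldistrib vector_sadd_rdistrib)

lemma dim_transfer:
  fixes L :: "complex^'n \<Rightarrow> (real \<Rightarrow> complex^'n)" and E0 :: "(complex^'n) set"
  assumes add: "\<And>x y. L (x + y) = L x + L y" and sc: "\<And>c x. L (c *s x) = fscale c (L x)"
    and inj: "inj L"
  shows "vector_space.dim fscale (L ` E0) = vec.dim E0"
    "\<exists>B. finite B \<and> L ` E0 \<subseteq> module.span fscale B"
proof -
  interpret P: finite_dimensional_vector_space_pair_1 "(*s)" "cart_basis :: (complex^'n) set" fscale
    by (intro finite_dimensional_vector_space_pair_1.intro vs_fscale) unfold_locales
  have lin: "Vector_Spaces.linear (*s) fscale L"
    using add sc vs_fscale vec.vector_space_axioms unfolding Vector_Spaces.linear_iff by blast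
  show "vector_space.dim fscale (L ` E0) = vec.dim E0"
    using P.dim_image_eq[OF lin] inj by (meson inj_on_subset subset_UNIV)
  have "L ` E0 \<subseteq> L ` vec.span cart_basis" using vec.span_superset by (auto simp: span_cart_basis)
  also have "\<dots> = module.span fscale (L ` cart_basis)"
  proof -
    interpret lf: Vector_Spaces.linear "(*s)" fscale L by (rule lin)
    show ?thesis using lf.span_image[of cart_basis] by simp
  qed
  finally show "\<exists>B. finite B \<and> L ` E0 \<subseteq> module.span fscale B"
    using finite_cart_basis by blast
qed

theorem theorem1:
  fixes f :: "real^'n \<Rightarrow> real \<Rightarrow> real^'n"
    and Df :: "((real^'n) \<times> real) \<Rightarrow> (((real^'n) \<times> real) \<Rightarrow>\<^sub>L (real^'n))"
    and T :: real
    and xs :: "real \<Rightarrow> real^'n"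
    and K :: "real^'n^'n"
  assumes f_deriv: "\<And>z. ((\<lambda>(x, t). f x t) has_derivative blinfun_apply (Df z)) (at z)"
    and f_C1: "continuous_on UNIV Df"
    and T_pos: "T > 0"
    and f_periodic: "\<And>x t. f x (t + T) = f x t"
    and xs_solution: "\<And>t. (xs has_vector_derivative f (xs t) t) (at t)"
    and xs_periodic: "\<And>t. xs (t + T) = xs t"
  defines "A \<equiv> (\<lambda>t. matrix (\<lambda>v. blinfun_apply (Df (xs t, t)) (v, 0)))"
  shows "(\<exists>B. finite B \<and> operator_eigenspace T (dde_solution_operator A K T T) 1 \<subseteq> module.span fscale B)
       \<and> geom_mult_matrix (monodromy_matrix A T) 1
           = geom_mult_operator T (dde_solution_operator A K T T) 1"
proof -
  have T: "T > 0" by (rule T_pos)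
  have cxs: "continuous_on UNIV xs" by (rule vd_cont[OF xs_solution])
  have cA: "continuous_on UNIV A"
  proof -
    have "continuous_on UNIV (\<lambda>t. Df (xs t, t))"
      by (rule continuous_on_compose2[OF f_C1]) (auto intro!: continuous_intros cxs)
    then have "continuous_on UNIV (\<lambda>t. blinfun_apply (Df (xs t, t)) (axis j 1, 0))" for j
      by (rule bounded_bilinear.continuous_on[OF bounded_bilinear_blinfun_apply]) (rule continuous_on_const)
    then show ?thesis unfolding A_def matrix_def
      by (intro continuous_on_vec_lambda continuous_on_component)
  qed
  have Dper: "blinfun_apply (Df (x, t + T)) (v, 0) = blinfun_apply (Df (x, t)) (v, 0)" for x t v
  proof -
    have pd: "((\<lambda>y. f y c) has_derivative (\<lambda>v. blinfun_apply (Df (x, c)) (v, 0))) (at x)" for c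
    proof -
      have "((\<lambda>y. (y, c)) has_derivative (\<lambda>v. (v, 0))) (at x)"
        by (rule has_derivative_Pair[OF has_derivative_ident has_derivative_const])
      from has_derivative_compose[OF this f_deriv[of "(x, c)"]] show ?thesis by simp
    qed
    have "(\<lambda>v. blinfun_apply (Df (x, t + T)) (v, 0)) = (\<lambda>v. blinfun_apply (Df (x, t)) (v, 0))"
      using pd[of "t + T"] pd[of t] f_periodic by (simp add: has_derivative_unique)
    then show ?thesis by meson
  qed
  have Aper: "A (t + T) = A t" for t
    unfolding A_def by (simp add: xs_periodic Dper)
  obtain Y W where F: "fundpair A Y W" using fund_ex[OF cA] by blast
  note Y0 = fp(1)[OF F] and Yd = fp(2)[OF F] and Wd = fp(3)[OF F] and WY = fp(4)[OF F]
    and YW = fp(5)[OF F] and Yfs = fp(6)[OF F] and Yrep = fp(7)[OF F]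
  have W0: "W 0 = mat 1" using WY[of 0] Y0 by simp
  have Yper: "Y (t + T) = Y t ** Y T" for t
  proof -
    have "((\<lambda>t. Y (t + T)) has_vector_derivative A t ** Y (t + T)) (at t)" for t
    proof -
      have "((\<lambda>t. t + T) has_vector_derivative 1) (at t)"
        by (rule derivative_eq_intros refl)+ simp
      from vector_diff_chain_at[OF this Yd[of "t + T"]] show ?thesis by (simp add: o_def Aper)
    qed
    from Yrep[OF this] show ?thesis by simp
  qed
  have cYv: "continuous_on S (\<lambda>t. cmat (Y t) *v v)" for S v
    by (rule bounded_bilinear.continuous_on[OF bb_mv continuous_on_cmat[OF vd_cont[OF Yd]] continuous_on_const])
  define L where "L v = (\<lambda>\<theta>. if \<theta> \<in> {-T..0} then cmat (Y \<theta>) *v v else 0)" for v :: "complex^'n"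
  define E0 where "E0 = matrix_eigenspace (monodromy_matrix A T) 1"
  define U where "U = dde_solution_operator A K T T"
  define E1 where "E1 = operator_eigenspace T U 1"
  have E0: "v \<in> E0 \<longleftrightarrow> cmat (Y T) *v v = v" for v
    unfolding E0_def matrix_eigenspace_def monodromy_matrix_def Yfs by auto
  have sub1: "L v \<in> E1" if v: "v \<in> E0" for v
  proof -
    have vv: "cmat (Y T) *v v = v" using v E0 by blast
    have Yv: "cmat (Y (s + T)) *v v = cmat (Y s) *v v" for s
      by (simp add: Yper cmat_mult matrix_vector_mul_assoc[symmetric] vv)
    define yv where "yv t = (if t < -T then 0 else cmat (Y t) *v v)" for t
    have sol: "dde_solution A K T (L v) yv"
      unfolding dde_solution_def
    proof (intro conjI allI impI ballI)
      show "continuous_on {-T..} yv"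
        by (rule continuous_on_eq[OF cYv]) (auto simp: yv_def)
    next
      fix t :: real assume t: "t \<ge> 0"
      have "((\<lambda>s. cmat (Y s)) has_vector_derivative cmat (A t ** Y t)) (at t within {0..})"
        using bl_vderiv[OF bl_cmat has_vector_derivative_at_within[OF Yd]] .
      from bounded_bilinear.vderiv[OF bb_mv this has_vector_derivative_const]
      have "((\<lambda>s. cmat (Y s) *v v) has_vector_derivative cmat (A t) *v (cmat (Y t) *v v)) (at t within {0..})"
        by (simp add: cmat_mult matrix_vector_mul_assoc)
      then have d: "(yv has_vector_derivative cmat (A t) *v (cmat (Y t) *v v)) (at t within {0..})"
        by (rule has_vector_derivative_transform[rotated 2]) (use t T in \<open>auto simp: yv_def\<close>)
      have "yv t = cmat (Y t) *v v" using t T by (simp add: yv_def)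
      moreover have "yv (t - T) = cmat (Y t) *v v" using t Yv[of "t - T"] by (simp add: yv_def)
      ultimately show "(yv has_vector_derivative cmat (A t) *v yv t + cmat K *v (yv t - yv (t - T))) (at t within {0..})"
        using d by simp
    qed (auto simp: yv_def L_def)
    have ds: "dde_sol A K T (L v) = yv" by (rule dde_sol_eq[OF cA T sol])
    have "L v \<in> phase_space T"
      unfolding phase_space_def by (auto simp: L_def intro!: continuous_on_eq[OF cYv])
    moreover have "fscale 1 (L v) = U (L v)"
    proof
      fix \<theta>
      show "fscale 1 (L v) \<theta> = U (L v) \<theta>"
        unfolding fscale_def U_def dde_solution_operator_def ds
        using T Yv[of \<theta>] by (auto simp: yv_def L_def add.commute)
    qed
    ultimately show ?thesis unfolding E1_def operator_eigenspace_def by blast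
  qed
  have sub2: "\<phi> \<in> L ` E0" if \<phi>: "\<phi> \<in> E1" for \<phi>
  proof -
    have \<phi>ps: "\<phi> \<in> phase_space T" and eig: "fscale 1 \<phi> = U \<phi>"
      using \<phi> unfolding E1_def operator_eigenspace_def by auto
    obtain y where y: "dde_solution A K T \<phi> y" using dde_exists[OF cA T \<phi>ps] by blast
    have ds: "dde_sol A K T \<phi> = y" by (rule dde_sol_eq[OF cA T y])
    have yc: "\<And>t. t \<in> {-T..0} \<Longrightarrow> y t = \<phi> t"
      "\<And>t. t \<ge> 0 \<Longrightarrow> (y has_vector_derivative (cmat (A t) *v y t + cmat K *v (y t - y (t - T)))) (at t within {0..})"
      using y unfolding dde_solution_def by blast+
    have \<phi>eq: "\<phi> \<theta> = (if \<theta> \<in> {-T..0} then y (T + \<theta>) else 0)" for \<theta>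
      using fun_cong[OF eig, of \<theta>] by (simp add: fscale_def U_def dde_solution_operator_def ds)
    have yper: "y t = y (t - T)" if "t \<in> {0..T}" for t
      using \<phi>eq[of "t - T"] yc(1)[of "t - T"] that by auto
    have "(y has_vector_derivative cmat (A t) *v y t) (at t within {0..T})" if t: "t \<in> {0..T}" for t
      using has_vector_derivative_within_subset[OF yc(2)[of t]] yper[OF t] t by auto
    then have cc: "cmat (W t) *v y t = cmat (W 0) *v y 0" if "t \<in> {0..T}" for t
      using complex_const[OF Wd] that by blast
    have yrep: "y t = cmat (Y t) *v y 0" if "t \<in> {0..T}" for t
      using cc[OF that] inv_apply[OF YW[of t], of "y t"] by (simp add: W0 cmat_one)
    define v where "v = \<phi> 0"
    have y0: "y 0 = v" unfolding v_def using yc(1)[of 0] T by simp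
    have yT: "y T = v" unfolding v_def using \<phi>eq[of 0] T by simp
    have vE: "v \<in> E0" unfolding E0 using yrep[of T] T y0 yT by simp
    have "\<phi> = L v"
    proof
      fix \<theta>
      show "\<phi> \<theta> = L v \<theta>"
      proof (cases "\<theta> \<in> {-T..0}")
        case True
        then have "y (T + \<theta>) = cmat (Y (\<theta> + T)) *v v" using yrep[of "T + \<theta>"] y0 by (auto simp: add.commute)
        also have "\<dots> = cmat (Y \<theta>) *v v"
          using vE[unfolded E0] by (simp add: Yper cmat_mult matrix_vector_mul_assoc[symmetric])
        finally show ?thesis using \<phi>eq[of \<theta>] True by (simp add: L_def)
      next
        case False then show ?thesis using \<phi>eq[of \<theta>] by (auto simp: L_def)
      qed
    qed
    then show ?thesis using vE by blast
  qed
  have E1eq: "E1 = L ` E0" using sub1 sub2 by blast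
  have add: "L (x + y) = L x + L y" for x y
    by (auto simp: L_def fun_eq_iff matrix_vector_right_distrib)
  have sc: "L (c *s x) = fscale c (L x)" for c x
    by (auto simp: L_def fscale_def fun_eq_iff vec_eq_iff matrix_vector_mult_def sum_distrib_left mult.left_commute)
  have inj: "inj L"
  proof (rule injI)
    fix x y assume "L x = L y"
    then have "L x 0 = L y 0" by simp
    then show "x = y" using T by (simp add: L_def Y0 cmat_one)
  qed
  note dt = dim_transfer[OF add sc inj, of E0]
  have E1': "operator_eigenspace T (dde_solution_operator A K T T) 1 = L ` E0"
    using E1eq unfolding E1_def U_def .
  show ?thesis
    unfolding E1' geom_mult_matrix_def geom_mult_operator_def E0_def[symmetric]
    using dt by simp
qed

end
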